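(* Let $X=(X_n:n\ge 0)$ be an irreducible positive recurrent Markov chain on a countable state space $S$ with one-step transition matrix $P=(P(x,y):x,y\in S)$ and (unique) stationary distribution $\pi$. Fix $z\in S$, and let $(A_n:n\ge 1)$ be a sequence of finite subsets of $S$ with $z\in A_1$, $A_n\subseteq A_{n+1}$ for all $n$, and $\bigcup_n A_n=S$. Let $\tilde\pi_n$ be the truncation approximation associated with the truncation set $A_n$ (as defined in the context). Then for each $x\in S$, $\tilde\pi_n(x)\to\pi(x)$ as $n\to\infty$.
   Context: Truncation approximation: for a finite set $A\subseteq S$ with $z\in A$, put $A'=A\setminus\{z\}$ and define the row vector $\tilde\nu=(\tilde\nu(x):x\in A')$ with $\tilde\nu(x)=P(z,x)$, the column vector $\tilde e=(\tilde e(x):x\in A')$ with $\tilde e(x)=1$, and the matrix $\tilde B=(\tilde B(x,y):x,y\in A')$ with $\tilde B(x,y)=P(x,y)$. (By irreducibility, $I-\tilde B$ is nonsingular.) The truncation approximation $\tilde\pi$ is the probability vector on $S$ given by $\tilde\pi(x)=\dfrac{(\tilde\nu(I-\tilde B)^{-1})(x)}{1+\tilde\nu(I-\tilde B)^{-1}\tilde e}$ for $x\in A'$, $\tilde\pi(z)=\left(1+\tilde\nu(I-\tilde B)^{-1}\tilde e\right)^{-1}$, and $\tilde\pi(y)=0$ for $y\in S\setminus A$. Here $\tilde\pi_n$ denotes this object with $A=A_n$. *)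

theory Defs
  imports "HOL-Analysis.Analysis"
begin

text \<open>Markov chains on a countable state space, modelled as a countable type 'a
  (the state space S is UNIV); transition matrix P :: 'a => 'a => real.\<close>

definition stochastic_matrix :: "('a \<Rightarrow> 'a \<Rightarrow> real) \<Rightarrow> bool" where
  "stochastic_matrix P \<longleftrightarrow> (\<forall>x y. 0 \<le> P x y) \<and> (\<forall>x. (P x has_sum 1) UNIV)"

fun mpow :: "('a \<Rightarrow> 'a \<Rightarrow> real) \<Rightarrow> nat \<Rightarrow> 'a \<Rightarrow> 'a \<Rightarrow> real" where
  "mpow P 0 x y = (if x = y then 1 else 0)"
| "mpow P (Suc n) x y = (\<Sum>\<^sub>\<infinity>w. mpow P n x w * P w y)"

definition irreducible_chain :: "('a \<Rightarrow> 'a \<Rightarrow> real) \<Rightarrow> bool" where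
  "irreducible_chain P \<longleftrightarrow> (\<forall>x y. \<exists>n. mpow P n x y > 0)"

text \<open>taboo probabilities: avoid x n w = P_x(X_1 \<noteq> x, ..., X_n \<noteq> x, X_n = w)
  (for n = 0 this is the indicator of w = x).\<close>
fun avoid :: "('a \<Rightarrow> 'a \<Rightarrow> real) \<Rightarrow> 'a \<Rightarrow> nat \<Rightarrow> 'a \<Rightarrow> real" where
  "avoid P x 0 w = (if w = x then 1 else 0)"
| "avoid P x (Suc n) w = (if w = x then 0 else (\<Sum>\<^sub>\<infinity>u. avoid P x n u * P u w))"

text \<open>first_return P x n = P_x(\<tau>_x = Suc n), \<tau>_x = inf {m \<ge> 1. X_m = x}.\<close>
definition first_return :: "('a \<Rightarrow> 'a \<Rightarrow> real) \<Rightarrow> 'a \<Rightarrow> nat \<Rightarrow> real" where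
  "first_return P x n = (\<Sum>\<^sub>\<infinity>u. avoid P x n u * P u x)"

text \<open>x is positive recurrent: P_x(\<tau>_x < \<infinity>) = 1 and E_x \<tau>_x < \<infinity>.\<close>
definition positive_recurrent_state :: "('a \<Rightarrow> 'a \<Rightarrow> real) \<Rightarrow> 'a \<Rightarrow> bool" where
  "positive_recurrent_state P x \<longleftrightarrow>
     (first_return P x sums 1) \<and> summable (\<lambda>n. real (Suc n) * first_return P x n)"

definition positive_recurrent_chain :: "('a \<Rightarrow> 'a \<Rightarrow> real) \<Rightarrow> bool" where
  "positive_recurrent_chain P \<longleftrightarrow> (\<forall>x. positive_recurrent_state P x)"

definition stationary_distribution :: "('a \<Rightarrow> 'a \<Rightarrow> real) \<Rightarrow> ('a \<Rightarrow> real) \<Rightarrow> bool" where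
  "stationary_distribution P \<pi> \<longleftrightarrow>
     (\<forall>x. 0 \<le> \<pi> x) \<and> (\<pi> has_sum 1) UNIV \<and> (\<forall>y. \<pi> y = (\<Sum>\<^sub>\<infinity>x. \<pi> x * P x y))"

definition inv_I_minus :: "'a set \<Rightarrow> ('a \<Rightarrow> 'a \<Rightarrow> real) \<Rightarrow> 'a \<Rightarrow> 'a \<Rightarrow> real" where
  "inv_I_minus I B = (THE M.
      (\<forall>x\<in>I. \<forall>y\<in>I. (\<Sum>u\<in>I. ((if x = u then 1 else 0) - B x u) * M u y) = (if x = y then 1 else 0)) \<and>
      (\<forall>x\<in>I. \<forall>y\<in>I. (\<Sum>u\<in>I. M x u * ((if u = y then 1 else 0) - B u y)) = (if x = y then 1 else 0)) \<and>
      (\<forall>x y. (x \<notin> I \<or> y \<notin> I) \<longrightarrow> M x y = 0))"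

definition trunc_approx :: "('a \<Rightarrow> 'a \<Rightarrow> real) \<Rightarrow> 'a \<Rightarrow> 'a set \<Rightarrow> 'a \<Rightarrow> real" where
  "trunc_approx P z A x =
     (let A' = A - {z};
          M = inv_I_minus A' P;
          w = (\<lambda>y. \<Sum>u\<in>A'. P z u * M u y);
          c = 1 + (\<Sum>y\<in>A'. w y)
      in if x = z then 1 / c else if x \<in> A' then w x / c else 0)"

end

theory Submission
  imports Defs "Jordan_Normal_Form.Determinant"
begin
lemma st_nonneg: "stochastic_matrix P \<Longrightarrow> 0 \<le> P x y"
  by (simp add: stochastic_matrix_def)

lemma st_has_sum: "stochastic_matrix P \<Longrightarrow> (P x has_sum 1) UNIV"
  by (simp add: stochastic_matrix_def)

lemma st_summable: "stochastic_matrix P \<Longrightarrow> P x summable_on UNIV"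
  unfolding summable_on_def using st_has_sum by (rule exI)

lemma st_infsum: "stochastic_matrix P \<Longrightarrow> infsum (P x) UNIV = 1"
  by (rule infsumI[OF st_has_sum])

lemma st_fin_le: "stochastic_matrix P \<Longrightarrow> finite F \<Longrightarrow> sum (P x) F \<le> 1"
  using finite_sum_le_infsum[OF st_summable[of P x], of F] st_infsum[of P x] st_nonneg[of P x] by simp

lemma st_le1: "stochastic_matrix P \<Longrightarrow> P x y \<le> 1"
  using st_fin_le[of P "{y}" x] by simp

lemma st_full: "stochastic_matrix P \<Longrightarrow> finite F \<Longrightarrow> sum (P x) F = 1 \<Longrightarrow> u \<notin> F \<Longrightarrow> P x u = 0"
  using st_fin_le[of P "insert u F" x] st_nonneg[of P x u] by simp

lemma mpow_nonneg: "stochastic_matrix P \<Longrightarrow> 0 \<le> mpow P n x y"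
  by (induction n arbitrary: y) (auto intro!: infsum_nonneg mult_nonneg_nonneg simp: st_nonneg)

lemma mpow_step:
  assumes st: "stochastic_matrix P" and pos: "0 < mpow P (Suc n) x y"
  shows "\<exists>w. 0 < mpow P n x w \<and> 0 < P w y"
proof (rule ccontr)
  assume "\<not> ?thesis"
  then have "\<forall>w. mpow P n x w * P w y = 0"
    using mpow_nonneg[OF st] st_nonneg[OF st] by (metis less_eq_real_def mult_eq_0_iff)
  then have "(\<lambda>w. mpow P n x w * P w y) = (\<lambda>_. 0)" by auto
  then have "mpow P (Suc n) x y = 0" by simp
  with pos show False by simp
qed

lemma closed_reach:
  assumes st: "stochastic_matrix P"
    and cl: "\<forall>a b. a \<in> S \<longrightarrow> 0 < P a b \<longrightarrow> b \<in> S"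
    and xS: "x \<in> S"
  shows "0 < mpow P n x y \<Longrightarrow> y \<in> S"
proof (induction n arbitrary: y)
  case 0
  then show ?case using xS by (simp split: if_splits)
next
  case (Suc n)
  then obtain w where "0 < mpow P n x w" "0 < P w y" using mpow_step[OF st] by blast
  then show ?case using Suc.IH cl by blast
qed

lemma closed_all:
  assumes st: "stochastic_matrix P" and irr: "irreducible_chain P"
    and cl: "\<And>a b. a \<in> S \<Longrightarrow> 0 < P a b \<Longrightarrow> b \<in> S"
    and xS: "x \<in> S"
  shows "y \<in> S"
proof -
  obtain n where "0 < mpow P n x y" using irr unfolding irreducible_chain_def by blast
  moreover have "\<forall>a b. a \<in> S \<longrightarrow> 0 < P a b \<longrightarrow> b \<in> S" using cl by blast
  ultimately show ?thesis using closed_reach[OF st _ xS] by blast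
qed

lemma weighted_summable:
  assumes st: "stochastic_matrix P" and fs: "f summable_on UNIV" and fn: "\<And>u. 0 \<le> f u"
  shows "(\<lambda>u. f u * P u y) summable_on UNIV"
  by (rule summable_on_comparison_test[OF fs])
     (auto simp: fn st_nonneg[OF st] st_le1[OF st] mult_left_le intro: mult_nonneg_nonneg)

lemma weighted_term_le:
  assumes st: "stochastic_matrix P" and fs: "f summable_on UNIV" and fn: "\<And>u. 0 \<le> f u"
  shows "f u * P u y \<le> infsum (\<lambda>u. f u * P u y) UNIV"
  using finite_sum_le_infsum[OF weighted_summable[OF st fs fn], of "{u}"]
  by (simp add: fn st_nonneg[OF st])

lemma superharmonic_nonneg:
  assumes st: "stochastic_matrix P" and irr: "irreducible_chain P"
    and fin: "finite I" and zI: "z \<notin> I"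
    and sup: "\<And>x. x \<in> I \<Longrightarrow> (\<Sum>u\<in>I. P x u * f u) \<le> f x"
    and xI: "x \<in> I"
  shows "0 \<le> f x"
proof (rule ccontr)
  assume neg: "\<not> 0 \<le> f x"
  define m where "m = Min (f ` I)"
  have mle: "\<And>u. u \<in> I \<Longrightarrow> m \<le> f u" unfolding m_def using fin by simp
  have mneg: "m < 0" using mle[OF xI] neg by simp
  have "m \<in> f ` I" unfolding m_def using fin xI by (intro Min_in) auto
  then obtain x0 where x0: "x0 \<in> I" "f x0 = m" by auto
  define S where "S = {u \<in> I. f u = m}"
  have cl: "b \<in> S" if aS: "a \<in> S" and pab: "0 < P a b" for a b
  proof -
    have aI: "a \<in> I" and fa: "f a = m" using aS by (auto simp: S_def)
    define s where "s = (\<Sum>u\<in>I. P a u)"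
    define T where "T = (\<Sum>u\<in>I. P a u * (f u - m))"
    have s1: "s \<le> 1" unfolding s_def using st_fin_le[OF st fin] by blast
    have "(\<Sum>u\<in>I. P a u * f u) = (\<Sum>u\<in>I. P a u * (f u - m) + m * P a u)"
      by (rule sum.cong) (auto simp: algebra_simps)
    also have "\<dots> = T + m * s" by (simp add: T_def s_def sum.distrib sum_distrib_left)
    finally have eq: "(\<Sum>u\<in>I. P a u * f u) = T + m * s" .
    have Tnn: "0 \<le> T" unfolding T_def
      by (intro sum_nonneg mult_nonneg_nonneg) (auto simp: st_nonneg[OF st] mle)
    have ms: "m \<le> m * s" using mneg s1 by (simp add: mult_le_cancel_left1)
    have "T + m * s \<le> m" using sup[OF aI] eq fa by simp
    then have T0: "T = 0" and s1': "m * s = m" using Tnn ms by linarith+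
    have sone: "s = 1" using s1' mneg by simp
    have terms: "\<forall>u\<in>I. P a u * (f u - m) = 0"
      using T0 unfolding T_def
      by (subst (asm) sum_nonneg_eq_0_iff[OF fin]) (auto simp: st_nonneg[OF st] mle)
    show "b \<in> S"
    proof (cases "b \<in> I")
      case True
      then have "P a b * (f b - m) = 0" using terms by blast
      then show ?thesis using pab True by (simp add: S_def)
    next
      case False
      then have "P a b = 0" using st_full[OF st fin, of a b] sone s_def by simp
      then show ?thesis using pab by simp
    qed
  qed
  have "z \<in> S" using closed_all[OF st irr cl, where x=x0 and y=z] x0 by (simp add: S_def)
  then show False using zI by (simp add: S_def)
qed

lemma inv_exists:
  assumes st: "stochastic_matrix P" and irr: "irreducible_chain P"
    and fin: "finite I" and zI: "z \<notin> I"
  shows "\<exists>M. (\<forall>x\<in>I. \<forall>y\<in>I. (\<Sum>u\<in>I. ((if x = u then 1 else 0) - P x u) * M u y) = (if x = y then 1 else 0)) \<and>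
      (\<forall>x\<in>I. \<forall>y\<in>I. (\<Sum>u\<in>I. M x u * ((if u = y then 1 else 0) - P u y)) = (if x = y then 1 else 0)) \<and>
      (\<forall>x y. (x \<notin> I \<or> y \<notin> I) \<longrightarrow> M x y = 0)"
proof -
  obtain xs where dist: "distinct xs" and setxs: "set xs = I"
    using finite_distinct_list[OF fin] by blast
  define n where "n = length xs"
  have bij: "bij_betw ((!) xs) {0..<n} I"
    using bij_betw_nth[OF dist _ setxs[symmetric]] by (simp add: n_def atLeast0LessThan)
  define idx where "idx = the_inv_into {0..<n} ((!) xs)"
  have inj: "inj_on ((!) xs) {0..<n}" using bij by (simp add: bij_betw_def)
  have idx1: "idx (xs ! i) = i" if "i < n" for i
    unfolding idx_def using the_inv_into_f_f[OF inj] that by simp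
  have idx2: "idx x < n" "xs ! idx x = x" if "x \<in> I" for x
  proof -
    have xim: "x \<in> (!) xs ` {0..<n}" using bij that by (simp add: bij_betw_def)
    show "idx x < n" unfolding idx_def using the_inv_into_into[OF inj xim, of "{0..<n}"] by simp
    show "xs ! idx x = x" unfolding idx_def using f_the_inv_into_f[OF inj xim] by simp
  qed
  have xsI: "xs ! i \<in> I" if "i < n" for i using that setxs n_def by auto
  have reidx: "(\<Sum>u\<in>I. g u) = (\<Sum>k\<in>{0..<n}. g (xs ! k))" for g :: "'a \<Rightarrow> real"
    using sum.reindex_bij_betw[OF bij, of g] by simp
  have deq: "(i = j) = (xs ! i = xs ! j)" if "i < n" "j < n" for i j
    using dist that n_def by (simp add: nth_eq_iff_index_eq)
  define Q :: "real mat" where "Q = mat n n (\<lambda>(i,j). (if i = j then 1 else 0) - P (xs ! i) (xs ! j))"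
  have Qc: "Q \<in> carrier_mat n n" by (simp add: Q_def)
  have Qij: "Q $$ (i,j) = (if xs ! i = xs ! j then 1 else 0) - P (xs ! i) (xs ! j)" if "i < n" "j < n" for i j
    using that deq[OF that] by (simp add: Q_def)
  have "det Q \<noteq> 0"
  proof
    assume "det Q = 0"
    then obtain v where vc: "v \<in> carrier_vec n" and vnz: "v \<noteq> 0\<^sub>v n" and Qv: "Q *\<^sub>v v = 0\<^sub>v n"
      using det_0_iff_vec_prod_zero[OF Qc] by blast
    define f where "f x = (if x \<in> I then v $ idx x else 0)" for x
    have fxs: "f (xs ! k) = v $ k" if "k < n" for k using that xsI idx1 by (simp add: f_def)
    have harm: "f x = (\<Sum>u\<in>I. P x u * f u)" if xI: "x \<in> I" for x
    proof -
      define i where "i = idx x"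
      have i: "i < n" "xs ! i = x" using idx2[OF xI] by (auto simp: i_def)
      have "0 = (Q *\<^sub>v v) $ i" using Qv i by simp
      also have "\<dots> = (\<Sum>k\<in>{0..<n}. Q $$ (i,k) * v $ k)"
        using i Qc vc by (simp add: scalar_prod_def)
      also have "\<dots> = (\<Sum>k\<in>{0..<n}. ((if x = xs ! k then 1 else 0) - P x (xs ! k)) * f (xs ! k))"
        by (rule sum.cong) (auto simp: Qij i fxs)
      also have "\<dots> = (\<Sum>u\<in>I. ((if x = u then 1 else 0) - P x u) * f u)"
        by (rule reidx[symmetric])
      also have "\<dots> = (\<Sum>u\<in>I. (if x = u then f u else 0) - P x u * f u)"
        by (rule sum.cong) (auto simp: algebra_simps)
      also have "\<dots> = (\<Sum>u\<in>I. (if x = u then f u else 0)) - (\<Sum>u\<in>I. P x u * f u)"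
        by (rule sum_subtractf)
      also have "\<dots> = f x - (\<Sum>u\<in>I. P x u * f u)" using xI fin by simp
      finally show ?thesis by simp
    qed
    have f0: "f x = 0" if xI: "x \<in> I" for x
    proof -
      have "0 \<le> f x"
        by (rule superharmonic_nonneg[OF st irr fin zI _ xI]) (simp add: harm)
      moreover have "0 \<le> (\<lambda>x. - f x) x"
        by (rule superharmonic_nonneg[OF st irr fin zI _ xI]) (simp add: harm sum_negf)
      ultimately show ?thesis by simp
    qed
    have "v = 0\<^sub>v n"
    proof (rule eq_vecI)
      fix k assume "k < dim_vec (0\<^sub>v n :: real vec)"
      then have k: "k < n" by simp
      show "v $ k = 0\<^sub>v n $ k" using fxs[OF k] f0[OF xsI[OF k]] k by simp
    qed (use vc in simp)
    with vnz show False by simp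
  qed
  from det_non_zero_imp_unit[OF Qc this, of undefined]
  obtain R where Rc: "R \<in> carrier_mat n n" and RQ: "R * Q = 1\<^sub>m n" and QR: "Q * R = 1\<^sub>m n"
    unfolding Units_def ring_mat_def by auto
  define M where "M x y = (if x \<in> I \<and> y \<in> I then R $$ (idx x, idx y) else 0)" for x y
  have Mxs: "M (xs ! k) y = R $$ (k, idx y)" if "k < n" "y \<in> I" for k y
    using that xsI idx1 by (simp add: M_def)
  have Mxs2: "M x (xs ! k) = R $$ (idx x, k)" if "k < n" "x \<in> I" for k x
    using that xsI idx1 by (simp add: M_def)
  have c1: "(\<Sum>u\<in>I. ((if x = u then 1 else 0) - P x u) * M u y) = (if x = y then 1 else 0)"
    if xI: "x \<in> I" and yI: "y \<in> I" for x y
  proof -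
    have "(\<Sum>u\<in>I. ((if x = u then 1 else 0) - P x u) * M u y)
        = (\<Sum>k\<in>{0..<n}. Q $$ (idx x, k) * R $$ (k, idx y))"
      by (subst reidx) (rule sum.cong, auto simp: Qij idx2 xI Mxs yI)
    also have "\<dots> = (Q * R) $$ (idx x, idx y)"
      using Qc Rc idx2 xI yI by (simp add: scalar_prod_def)
    also have "\<dots> = (if x = y then 1 else 0)"
      using QR idx2 xI yI deq by (metis index_one_mat)
    finally show ?thesis .
  qed
  have c2: "(\<Sum>u\<in>I. M x u * ((if u = y then 1 else 0) - P u y)) = (if x = y then 1 else 0)"
    if xI: "x \<in> I" and yI: "y \<in> I" for x y
  proof -
    have "(\<Sum>u\<in>I. M x u * ((if u = y then 1 else 0) - P u y))
        = (\<Sum>k\<in>{0..<n}. R $$ (idx x, k) * Q $$ (k, idx y))"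
      by (subst reidx) (rule sum.cong, auto simp: Qij idx2 xI Mxs2 yI)
    also have "\<dots> = (R * Q) $$ (idx x, idx y)"
      using Qc Rc idx2 xI yI by (simp add: scalar_prod_def)
    also have "\<dots> = (if x = y then 1 else 0)"
      using RQ idx2 xI yI deq by (metis index_one_mat)
    finally show ?thesis .
  qed
  have c3: "\<forall>x y. (x \<notin> I \<or> y \<notin> I) \<longrightarrow> M x y = 0" by (auto simp: M_def)
  show ?thesis using c1 c2 c3 by blast
qed

lemma delta_sum_r: "finite I \<Longrightarrow> y \<in> I \<Longrightarrow> (\<Sum>u\<in>I. f u * (if u = y then 1 else 0)) = (f y :: real)"
proof -
  assume "finite I" "y \<in> I"
  have "(\<Sum>u\<in>I. f u * (if u = y then 1 else 0)) = (\<Sum>u\<in>I. if u = y then f u else 0)"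
    by (rule sum.cong) auto
  then show ?thesis using \<open>finite I\<close> \<open>y \<in> I\<close> by simp
qed

lemma delta_sum_l: "finite I \<Longrightarrow> x \<in> I \<Longrightarrow> (\<Sum>u\<in>I. (if x = u then 1 else 0) * f u) = (f x :: real)"
proof -
  assume "finite I" "x \<in> I"
  have "(\<Sum>u\<in>I. (if x = u then 1 else 0) * f u) = (\<Sum>u\<in>I. if x = u then f u else 0)"
    by (rule sum.cong) auto
  then show ?thesis using \<open>finite I\<close> \<open>x \<in> I\<close> by simp
qed

lemma sum_swap3:
  "(\<Sum>x\<in>I. (\<Sum>y\<in>J. a y * b y x) * (c x :: real)) = (\<Sum>y\<in>J. a y * (\<Sum>x\<in>I. b y x * c x))"
  unfolding sum_distrib_left sum_distrib_right mult.assoc by (rule sum.swap)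

lemma inv_props:
  assumes st: "stochastic_matrix P" and irr: "irreducible_chain P"
    and fin: "finite I" and zI: "z \<notin> I"
  shows "\<forall>x\<in>I. \<forall>y\<in>I. (\<Sum>u\<in>I. ((if x = u then 1 else 0) - P x u) * inv_I_minus I P u y) = (if x = y then 1 else 0)"
    and "\<forall>x\<in>I. \<forall>y\<in>I. (\<Sum>u\<in>I. inv_I_minus I P x u * ((if u = y then 1 else 0) - P u y)) = (if x = y then 1 else 0)"
    and "\<forall>x y. (x \<notin> I \<or> y \<notin> I) \<longrightarrow> inv_I_minus I P x y = 0"
proof -
  obtain M where
    M1: "\<forall>x\<in>I. \<forall>y\<in>I. (\<Sum>u\<in>I. ((if x = u then 1 else 0) - P x u) * M u y) = (if x = y then 1 else 0)" and
    M2: "\<forall>x\<in>I. \<forall>y\<in>I. (\<Sum>u\<in>I. M x u * ((if u = y then 1 else 0) - P u y)) = (if x = y then 1 else 0)" and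
    M3: "\<forall>x y. (x \<notin> I \<or> y \<notin> I) \<longrightarrow> M x y = 0"
    using inv_exists[OF st irr fin zI] by blast
  have "inv_I_minus I P = M"
    unfolding inv_I_minus_def
  proof (rule the_equality)
    show "(\<forall>x\<in>I. \<forall>y\<in>I. (\<Sum>u\<in>I. ((if x = u then 1 else 0) - P x u) * M u y) = (if x = y then 1 else 0)) \<and>
      (\<forall>x\<in>I. \<forall>y\<in>I. (\<Sum>u\<in>I. M x u * ((if u = y then 1 else 0) - P u y)) = (if x = y then 1 else 0)) \<and>
      (\<forall>x y. (x \<notin> I \<or> y \<notin> I) \<longrightarrow> M x y = 0)" using M1 M2 M3 by blast
  next
    fix M' assume H: "(\<forall>x\<in>I. \<forall>y\<in>I. (\<Sum>u\<in>I. ((if x = u then 1 else 0) - P x u) * M' u y) = (if x = y then 1 else 0)) \<and>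
      (\<forall>x\<in>I. \<forall>y\<in>I. (\<Sum>u\<in>I. M' x u * ((if u = y then 1 else 0) - P u y)) = (if x = y then 1 else 0)) \<and>
      (\<forall>x y. (x \<notin> I \<or> y \<notin> I) \<longrightarrow> M' x y = 0)"
    show "M' = M"
    proof (intro ext)
      fix x y
      show "M' x y = M x y"
      proof (cases "x \<in> I \<and> y \<in> I")
        case False
        then show ?thesis using H M3 by auto
      next
        case True
        then have xI: "x \<in> I" and yI: "y \<in> I" by auto
        have "M' x y = (\<Sum>u\<in>I. M' x u * (if u = y then 1 else 0))"
          using delta_sum_r[OF fin yI] by simp
        also have "\<dots> = (\<Sum>u\<in>I. M' x u * (\<Sum>v\<in>I. ((if u = v then 1 else 0) - P u v) * M v y))"
          by (rule sum.cong) (use M1 yI in auto)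
        also have "\<dots> = (\<Sum>v\<in>I. (\<Sum>u\<in>I. M' x u * ((if u = v then 1 else 0) - P u v)) * M v y)"
          by (rule sum_swap3[symmetric])
        also have "\<dots> = (\<Sum>v\<in>I. (if x = v then 1 else 0) * M v y)"
          by (rule sum.cong) (use H xI in auto)
        also have "\<dots> = M x y" using delta_sum_l[OF fin xI] by simp
        finally show ?thesis .
      qed
    qed
  qed
  then show "\<forall>x\<in>I. \<forall>y\<in>I. (\<Sum>u\<in>I. ((if x = u then 1 else 0) - P x u) * inv_I_minus I P u y) = (if x = y then 1 else 0)"
    and "\<forall>x\<in>I. \<forall>y\<in>I. (\<Sum>u\<in>I. inv_I_minus I P x u * ((if u = y then 1 else 0) - P u y)) = (if x = y then 1 else 0)"
    and "\<forall>x y. (x \<notin> I \<or> y \<notin> I) \<longrightarrow> inv_I_minus I P x y = 0"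
    using M1 M2 M3 by simp_all
qed

lemma inv_nonneg:
  assumes st: "stochastic_matrix P" and irr: "irreducible_chain P"
    and fin: "finite I" and zI: "z \<notin> I"
  shows "0 \<le> inv_I_minus I P x y"
proof (cases "x \<in> I \<and> y \<in> I")
  case False
  then show ?thesis using inv_props(3)[OF st irr fin zI] by auto
next
  case True
  then have xI: "x \<in> I" and yI: "y \<in> I" by auto
  let ?M = "inv_I_minus I P"
  show ?thesis
  proof (rule superharmonic_nonneg[OF st irr fin zI _ xI, where f = "\<lambda>x. ?M x y"])
    fix a assume aI: "a \<in> I"
    have "(if a = y then 1 else 0) = (\<Sum>u\<in>I. ((if a = u then 1 else 0) - P a u) * ?M u y)"
      using inv_props(1)[OF st irr fin zI] aI yI by simp
    also have "\<dots> = (\<Sum>u\<in>I. (if a = u then 1 else 0) * ?M u y - P a u * ?M u y)"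
      by (rule sum.cong) (auto simp: algebra_simps)
    also have "\<dots> = ?M a y - (\<Sum>u\<in>I. P a u * ?M u y)"
      by (simp add: sum_subtractf delta_sum_l[OF fin aI])
    finally show "(\<Sum>u\<in>I. P a u * ?M u y) \<le> ?M a y" by (simp split: if_splits)
  qed
qed

definition Wv :: "('a \<Rightarrow> 'a \<Rightarrow> real) \<Rightarrow> 'a \<Rightarrow> 'a set \<Rightarrow> 'a \<Rightarrow> real" where
  "Wv P z A y = (\<Sum>u\<in>A-{z}. P z u * inv_I_minus (A-{z}) P u y)"

lemma trunc_eq: "trunc_approx P z A x =
   (if x = z then 1 / (1 + (\<Sum>y\<in>A-{z}. Wv P z A y))
    else if x \<in> A - {z} then Wv P z A x / (1 + (\<Sum>y\<in>A-{z}. Wv P z A y)) else 0)"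
  by (simp add: trunc_approx_def Wv_def Let_def)

lemma W_nonneg:
  assumes st: "stochastic_matrix P" and irr: "irreducible_chain P" and fin: "finite A"
  shows "0 \<le> Wv P z A y"
  unfolding Wv_def using fin
  by (intro sum_nonneg mult_nonneg_nonneg st_nonneg[OF st] inv_nonneg[OF st irr, where z=z]) auto

lemma W_out:
  assumes st: "stochastic_matrix P" and irr: "irreducible_chain P" and fin: "finite A"
    and y: "y \<notin> A - {z}"
  shows "Wv P z A y = 0"
  unfolding Wv_def using inv_props(3)[OF st irr _, of "A - {z}" z] fin y by simp

lemma W_eq:
  assumes st: "stochastic_matrix P" and irr: "irreducible_chain P" and fin: "finite A"
    and xI: "x \<in> A - {z}"
  shows "Wv P z A x = P z x + (\<Sum>y\<in>A-{z}. Wv P z A y * P y x)"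
proof -
  define I where "I = A - {z}"
  define M where "M = inv_I_minus I P"
  have finI: "finite I" and zI: "z \<notin> I" using fin by (auto simp: I_def)
  have xI': "x \<in> I" using xI by (simp add: I_def)
  have W: "Wv P z A y = (\<Sum>u\<in>I. P z u * M u y)" for y by (simp add: Wv_def I_def M_def)
  have c2: "\<forall>a\<in>I. \<forall>b\<in>I. (\<Sum>u\<in>I. M a u * ((if u = b then 1 else 0) - P u b)) = (if a = b then 1 else 0)"
    using inv_props(2)[OF st irr finI zI] by (simp add: M_def)
  have "(\<Sum>y\<in>I. Wv P z A y * ((if y = x then 1 else 0) - P y x))
      = (\<Sum>y\<in>I. (\<Sum>u\<in>I. P z u * M u y) * ((if y = x then 1 else 0) - P y x))"
    by (simp add: W)
  also have "\<dots> = (\<Sum>u\<in>I. P z u * (\<Sum>y\<in>I. M u y * ((if y = x then 1 else 0) - P y x)))"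
    by (rule sum_swap3)
  also have "\<dots> = (\<Sum>u\<in>I. P z u * (if u = x then 1 else 0))"
    by (rule sum.cong) (use c2 xI' in auto)
  also have "\<dots> = P z x" by (rule delta_sum_r[OF finI xI'])
  finally have e: "(\<Sum>y\<in>I. Wv P z A y * ((if y = x then 1 else 0) - P y x)) = P z x" .
  have "(\<Sum>y\<in>I. Wv P z A y * ((if y = x then 1 else 0) - P y x))
      = (\<Sum>y\<in>I. Wv P z A y * (if y = x then 1 else 0) - Wv P z A y * P y x)"
    by (rule sum.cong) (auto simp: algebra_simps)
  also have "\<dots> = Wv P z A x - (\<Sum>y\<in>I. Wv P z A y * P y x)"
    by (simp add: sum_subtractf delta_sum_r[OF finI xI'])
  finally show ?thesis using e by (simp add: I_def)
qed

lemma W_le: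
  assumes st: "stochastic_matrix P" and irr: "irreducible_chain P" and fin: "finite A"
    and sup: "\<And>x. x \<in> A - {z} \<Longrightarrow> P z x + (\<Sum>y\<in>A-{z}. v y * P y x) \<le> v x"
    and yI: "y \<in> A - {z}"
  shows "Wv P z A y \<le> v y"
proof -
  define I where "I = A - {z}"
  define M where "M = inv_I_minus I P"
  have finI: "finite I" and zI: "z \<notin> I" using fin by (auto simp: I_def)
  have yI': "y \<in> I" using yI by (simp add: I_def)
  have W: "Wv P z A y = (\<Sum>u\<in>I. P z u * M u y)" by (simp add: Wv_def I_def M_def)
  have c1: "\<forall>a\<in>I. \<forall>b\<in>I. (\<Sum>u\<in>I. ((if a = u then 1 else 0) - P a u) * M u b) = (if a = b then 1 else 0)"
    using inv_props(1)[OF st irr finI zI] by (simp add: M_def)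
  define r where "r x = v x - P z x - (\<Sum>w\<in>I. v w * P w x)" for x
  have rnn: "0 \<le> r x" if "x \<in> I" for x using sup[of x] that by (simp add: r_def I_def)
  have req: "r x = (\<Sum>w\<in>I. v w * ((if w = x then 1 else 0) - P w x)) - P z x" if xI: "x \<in> I" for x
  proof -
    have "(\<Sum>w\<in>I. v w * ((if w = x then 1 else 0) - P w x))
        = (\<Sum>w\<in>I. v w * (if w = x then 1 else 0) - v w * P w x)"
      by (rule sum.cong) (auto simp: algebra_simps)
    also have "\<dots> = v x - (\<Sum>w\<in>I. v w * P w x)"
      by (simp add: sum_subtractf delta_sum_r[OF finI xI])
    finally show ?thesis by (simp add: r_def)
  qed
  have "0 \<le> (\<Sum>x\<in>I. r x * M x y)"
    by (intro sum_nonneg mult_nonneg_nonneg rnn inv_nonneg[OF st irr finI zI, unfolded M_def[symmetric]])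
  also have "\<dots> = (\<Sum>x\<in>I. (\<Sum>w\<in>I. v w * ((if w = x then 1 else 0) - P w x)) * M x y - P z x * M x y)"
    by (rule sum.cong) (auto simp: req algebra_simps)
  also have "\<dots> = (\<Sum>x\<in>I. (\<Sum>w\<in>I. v w * ((if w = x then 1 else 0) - P w x)) * M x y) - Wv P z A y"
    by (simp add: sum_subtractf W)
  also have "(\<Sum>x\<in>I. (\<Sum>w\<in>I. v w * ((if w = x then 1 else 0) - P w x)) * M x y)
      = (\<Sum>w\<in>I. v w * (\<Sum>x\<in>I. ((if w = x then 1 else 0) - P w x) * M x y))"
    by (rule sum_swap3)
  also have "\<dots> = (\<Sum>w\<in>I. v w * (if w = y then 1 else 0))"
    by (rule sum.cong) (use c1 yI' in auto)
  also have "\<dots> = v y" by (rule delta_sum_r[OF finI yI'])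
  finally show ?thesis by simp
qed

lemma mass_preserved:
  assumes st: "stochastic_matrix P" and gs: "g summable_on UNIV" and gn: "\<And>u. 0 \<le> g u"
  shows "(\<lambda>y. infsum (\<lambda>u. g u * P u y) UNIV) summable_on UNIV"
    and "infsum (\<lambda>y. infsum (\<lambda>u. g u * P u y) UNIV) UNIV = infsum g UNIV"
proof -
  have prod: "(\<lambda>(y,u). g u * P u y) summable_on (UNIV \<times> UNIV)"
  proof (rule nonneg_bdd_above_summable_on)
    show "\<And>x. x \<in> UNIV \<times> UNIV \<Longrightarrow> 0 \<le> (case x of (y, u) \<Rightarrow> g u * P u y)"
      using gn st_nonneg[OF st] by (auto intro: mult_nonneg_nonneg)
    show "bdd_above (sum (\<lambda>(y,u). g u * P u y) ` {F. F \<subseteq> UNIV \<times> UNIV \<and> finite F})"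
    proof (rule bdd_aboveI2)
      fix G :: "('a \<times> 'a) set" assume "G \<in> {F. F \<subseteq> UNIV \<times> UNIV \<and> finite F}"
      then have finG: "finite G" by simp
      define Y where "Y = fst ` G"
      define U where "U = snd ` G"
      have fin: "finite Y" "finite U" using finG by (auto simp: Y_def U_def)
      have sub: "G \<subseteq> Y \<times> U" unfolding Y_def U_def by (rule subset_fst_snd)
      have "sum (\<lambda>(y,u). g u * P u y) G \<le> sum (\<lambda>(y,u). g u * P u y) (Y \<times> U)"
        by (rule sum_mono2) (use fin sub gn st_nonneg[OF st] in \<open>auto intro: mult_nonneg_nonneg\<close>)
      also have "\<dots> = (\<Sum>y\<in>Y. \<Sum>u\<in>U. g u * P u y)" by (simp add: sum.cartesian_product)
      also have "\<dots> = (\<Sum>u\<in>U. g u * (\<Sum>y\<in>Y. P u y))"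
        by (subst sum.swap) (simp add: sum_distrib_left)
      also have "\<dots> \<le> (\<Sum>u\<in>U. g u)"
        by (rule sum_mono, rule mult_left_le[OF st_fin_le[OF st fin(1)] gn])
      also have "\<dots> \<le> infsum g UNIV"
        by (rule finite_sum_le_infsum[OF gs fin(2)]) (auto simp: gn)
      finally show "sum (\<lambda>(y,u). g u * P u y) G \<le> infsum g UNIV" .
    qed
  qed
  show "(\<lambda>y. infsum (\<lambda>u. g u * P u y) UNIV) summable_on UNIV"
    using summable_on_Sigma_banach[where f = "\<lambda>y u. g u * P u y" and A = UNIV and B = "\<lambda>_. UNIV"] prod
    by simp
  have "infsum (\<lambda>y. infsum (\<lambda>u. g u * P u y) UNIV) UNIV = infsum (\<lambda>u. infsum (\<lambda>y. g u * P u y) UNIV) UNIV"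
    by (rule infsum_swap_banach[where f = "\<lambda>y u. g u * P u y"]) (use prod in simp)
  also have "\<dots> = infsum g UNIV"
    by (rule infsum_cong) (simp add: infsum_cmult_right st_summable[OF st] st_infsum[OF st])
  finally show "infsum (\<lambda>y. infsum (\<lambda>u. g u * P u y) UNIV) UNIV = infsum g UNIV" .
qed

lemma finite_in_seq:
  assumes mono: "\<And>n. B n \<subseteq> B (Suc n)" and cover: "\<And>x. \<exists>n. x \<in> B n" and fin: "finite F"
  shows "\<exists>N. \<forall>n\<ge>N. F \<subseteq> B n"
  using fin
proof (induction F rule: finite_induct)
  case empty
  then show ?case by simp
next
  case (insert x F)
  then obtain N1 where N1: "\<forall>n\<ge>N1. F \<subseteq> B n" by blast
  obtain N2 where N2: "x \<in> B N2" using cover by blast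
  have "insert x F \<subseteq> B n" if n: "n \<ge> max N1 N2" for n
  proof -
    have "B N2 \<subseteq> B n" using lift_Suc_mono_le[of B, OF mono, of N2 n] n by simp
    then show ?thesis using N1 N2 n by auto
  qed
  then show ?case by blast
qed

theorem proposition1:
  fixes P :: "'a::countable \<Rightarrow> 'a \<Rightarrow> real"
    and \<pi> :: "'a \<Rightarrow> real"
    and z :: 'a
    and A :: "nat \<Rightarrow> 'a set"
  assumes "stochastic_matrix P"
    and "irreducible_chain P"
    and "positive_recurrent_chain P"
    and "stationary_distribution P \<pi>"
    and "\<And>n. n \<ge> 1 \<Longrightarrow> finite (A n)"
    and "z \<in> A 1"
    and "\<And>n. n \<ge> 1 \<Longrightarrow> A n \<subseteq> A (Suc n)"
    and "(\<Union>n\<in>{1..}. A n) = UNIV"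
  shows "\<forall>x. (\<lambda>n. trunc_approx P z (A n) x) \<longlonglongrightarrow> \<pi> x"
proof -
  note st = assms(1) and irr = assms(2)
  have pinn: "\<And>x. 0 \<le> \<pi> x" and pihs: "(\<pi> has_sum 1) UNIV"
    and piinv: "\<And>y. \<pi> y = infsum (\<lambda>x. \<pi> x * P x y) UNIV"
    using assms(4) unfolding stationary_distribution_def by blast+
  have pis: "\<pi> summable_on UNIV" unfolding summable_on_def using pihs by (rule exI)
  have pisum: "infsum \<pi> UNIV = 1" by (rule infsumI[OF pihs])
  have clpi: "b \<in> {x. 0 < \<pi> x}" if "a \<in> {x. 0 < \<pi> x}" "0 < P a b" for a b
  proof -
    have "\<pi> a * P a b \<le> \<pi> b" using weighted_term_le[OF st pis pinn, of a b] piinv[of b, symmetric] by simp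
    moreover have "0 < \<pi> a * P a b" using that by simp
    ultimately show ?thesis by simp
  qed
  have "\<exists>x. 0 < \<pi> x"
  proof (rule ccontr)
    assume "\<not> ?thesis"
    then have nz: "\<not> 0 < \<pi> x" for x by blast
    have "\<pi> x = 0" for x using pinn[of x] nz[of x] by linarith
    then have "\<pi> = (\<lambda>_. 0)" by (rule ext)
    then show False using pisum by simp
  qed
  then obtain x0 where "0 < \<pi> x0" by blast
  then have pz: "0 < \<pi> z" using closed_all[OF st irr clpi, where x = x0 and y = z] by simp

  define B where "B n = A (Suc n)" for n
  have finB: "finite (B n)" for n using assms(5) by (simp add: B_def)
  have monoB1: "B n \<subseteq> B (Suc n)" for n using assms(7)[of "Suc n"] by (simp add: B_def)
  have monoB: "B m \<subseteq> B n" if "m \<le> n" for m n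
    using lift_Suc_mono_le[of B, OF monoB1, of m n] that by simp
  have zB: "z \<in> B n" for n using monoB[of 0 n] assms(6) by (auto simp: B_def)
  have cover: "\<exists>n. x \<in> B n" for x
  proof -
    have "x \<in> (\<Union>n\<in>{1..}. A n)" using assms(8) by simp
    then obtain m where "m \<ge> 1" "x \<in> A m" by auto
    then have "x \<in> B (m - 1)" by (simp add: B_def)
    then show ?thesis by blast
  qed
  have evF: "\<exists>N. \<forall>n\<ge>N. F \<subseteq> B n" if "finite F" for F
    using finite_in_seq[OF monoB1 cover that] by blast

  define H where "H y = \<pi> y / \<pi> z" for y
  define w where "w n y = Wv P z (B n) y" for n y
  define w' where "w' n y = (if y = z then 1 else w n y)" for n y
  have wnn: "0 \<le> w n y" for n y unfolding w_def by (rule W_nonneg[OF st irr finB])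
  have w'nn: "0 \<le> w' n y" for n y using wnn by (simp add: w'_def)
  have Hnn: "0 \<le> H y" for y using pinn pz by (simp add: H_def)
  have Hs: "H summable_on UNIV"
  proof -
    have "(\<lambda>y. \<pi> y * inverse (\<pi> z)) summable_on UNIV" by (rule summable_on_cmult_left[OF pis])
    moreover have "H = (\<lambda>y. \<pi> y * inverse (\<pi> z))" by (rule ext) (simp add: H_def divide_inverse)
    ultimately show ?thesis by simp
  qed
  have Hsum: "infsum H UNIV = 1 / \<pi> z"
  proof -
    have "infsum (\<lambda>y. \<pi> y * inverse (\<pi> z)) UNIV = infsum \<pi> UNIV * inverse (\<pi> z)"
      by (rule infsum_cmult_left')
    moreover have "H = (\<lambda>y. \<pi> y * inverse (\<pi> z))" by (rule ext) (simp add: H_def divide_inverse)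
    ultimately show ?thesis by (simp add: divide_inverse pisum)
  qed

  have wle: "w' n y \<le> H y" for n y
  proof (cases "y = z")
    case True then show ?thesis using pz by (simp add: w'_def H_def)
  next
    case False
    show ?thesis
    proof (cases "y \<in> B n - {z}")
      case yI: True
      have "w n y \<le> H y" unfolding w_def
      proof (rule W_le[OF st irr finB _ yI])
        fix x assume xI: "x \<in> B n - {z}"
        have "(\<Sum>u\<in>B n. \<pi> u * P u x) \<le> infsum (\<lambda>u. \<pi> u * P u x) UNIV"
          by (rule finite_sum_le_infsum[OF weighted_summable[OF st pis pinn] finB])
             (auto simp: pinn st_nonneg[OF st])
        also have "\<dots> = \<pi> x" using piinv[of x, symmetric] by simp
        finally have a: "(\<Sum>u\<in>B n. \<pi> u * P u x) \<le> \<pi> x" .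
        have b: "(\<Sum>u\<in>B n. \<pi> u * P u x) = \<pi> z * P z x + (\<Sum>u\<in>B n - {z}. \<pi> u * P u x)"
          by (rule sum.remove[OF finB zB])
        have c: "(\<pi> z * P z x + (\<Sum>u\<in>B n - {z}. \<pi> u * P u x)) / \<pi> z \<le> \<pi> x / \<pi> z"
          using a b pz by (simp add: divide_right_mono)
        have d: "(\<pi> z * P z x + (\<Sum>u\<in>B n - {z}. \<pi> u * P u x)) / \<pi> z = P z x + (\<Sum>u\<in>B n - {z}. H u * P u x)"
          using pz by (simp add: H_def add_divide_distrib sum_divide_distrib)
        show "P z x + (\<Sum>u\<in>B n - {z}. H u * P u x) \<le> H x" using c d by (simp add: H_def)
      qed
      then show ?thesis using False by (simp add: w'_def)
    next
      case False': False
      have "w n y = 0" unfolding w_def by (rule W_out[OF st irr finB False'])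
      then show ?thesis using False Hnn by (simp add: w'_def)
    qed
  qed

  have wmono: "w' m y \<le> w' n y" if mn: "m \<le> n" for m n y
  proof (cases "y = z")
    case True then show ?thesis by (simp add: w'_def)
  next
    case False
    have "w m y \<le> w n y"
    proof (cases "y \<in> B m - {z}")
      case yI: True
      show ?thesis unfolding w_def
      proof (rule W_le[OF st irr finB _ yI])
        fix x assume xI: "x \<in> B m - {z}"
        then have xIn: "x \<in> B n - {z}" using monoB[OF mn] by auto
        have "(\<Sum>u\<in>B m - {z}. Wv P z (B n) u * P u x) \<le> (\<Sum>u\<in>B n - {z}. Wv P z (B n) u * P u x)"
        proof (rule sum_mono2)
          show "finite (B n - {z})" using finB by simp
          show "B m - {z} \<subseteq> B n - {z}" using monoB[OF mn] by auto
          show "\<And>b. b \<in> B n - {z} - (B m - {z}) \<Longrightarrow> 0 \<le> Wv P z (B n) b * P b x"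
            using W_nonneg[OF st irr finB] st_nonneg[OF st] by (simp add: mult_nonneg_nonneg)
        qed
        then have "P z x + (\<Sum>u\<in>B m - {z}. Wv P z (B n) u * P u x) \<le> P z x + (\<Sum>u\<in>B n - {z}. Wv P z (B n) u * P u x)"
          by (rule add_left_mono)
        also have "\<dots> = Wv P z (B n) x" using W_eq[OF st irr finB xIn] by simp
        finally show "P z x + (\<Sum>u\<in>B m - {z}. Wv P z (B n) u * P u x) \<le> Wv P z (B n) x" .
      qed
    next
      case False
      then show ?thesis using wnn W_out[OF st irr finB False] by (simp add: w_def)
    qed
    then show ?thesis using False by (simp add: w'_def)
  qed

  define h where "h y = (SUP n. w' n y)" for y
  have hlim: "(\<lambda>n. w' n y) \<longlonglongrightarrow> h y" for y
    unfolding h_def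
  proof (rule LIMSEQ_incseq_SUP)
    show "bdd_above (range (\<lambda>n. w' n y))" by (rule bdd_aboveI2) (rule wle)
    show "incseq (\<lambda>n. w' n y)" unfolding incseq_def using wmono by blast
  qed
  have hle: "h y \<le> H y" for y by (rule LIMSEQ_le_const2[OF hlim]) (use wle in blast)
  have hnn: "0 \<le> h y" for y by (rule LIMSEQ_le_const[OF hlim]) (use w'nn in blast)
  have hz: "h z = 1"
  proof -
    have "(\<lambda>n. w' n z) = (\<lambda>n. 1)" by (simp add: w'_def)
    then show ?thesis using hlim[of z] LIMSEQ_unique tendsto_const by metis
  qed
  have hs: "h summable_on UNIV" by (rule summable_on_comparison_test[OF Hs]) (auto simp: hle hnn)

  have hsup: "infsum (\<lambda>u. h u * P u y) UNIV \<le> h y" if yz: "y \<noteq> z" for y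
  proof (rule infsum_le_finite_sums[OF weighted_summable[OF st hs hnn]])
    fix F :: "'a set" assume finF: "finite F" and "F \<subseteq> UNIV"
    obtain N where N: "\<forall>n\<ge>N. insert y F \<subseteq> B n" using evF[of "insert y F"] finF by auto
    have lim1: "(\<lambda>n. \<Sum>u\<in>F. w' n u * P u y) \<longlonglongrightarrow> (\<Sum>u\<in>F. h u * P u y)"
      by (intro tendsto_sum tendsto_mult_right hlim)
    have "\<forall>n\<ge>N. (\<Sum>u\<in>F. w' n u * P u y) \<le> w' n y"
    proof (intro allI impI)
      fix n assume "n \<ge> N"
      then have sub: "insert y F \<subseteq> B n" using N by blast
      have yIn: "y \<in> B n - {z}" using sub yz by auto
      have "(\<Sum>u\<in>F. w' n u * P u y) \<le> (\<Sum>u\<in>B n. w' n u * P u y)"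
      proof (rule sum_mono2[OF finB])
        show "F \<subseteq> B n" using sub by simp
        show "\<And>b. b \<in> B n - F \<Longrightarrow> 0 \<le> w' n b * P b y"
          using w'nn st_nonneg[OF st] by (simp add: mult_nonneg_nonneg)
      qed
      also have "\<dots> = w' n z * P z y + (\<Sum>u\<in>B n - {z}. w' n u * P u y)"
        by (rule sum.remove[OF finB zB])
      also have "(\<Sum>u\<in>B n - {z}. w' n u * P u y) = (\<Sum>u\<in>B n - {z}. w n u * P u y)"
        by (rule sum.cong) (auto simp: w'_def)
      also have "w' n z * P z y + (\<Sum>u\<in>B n - {z}. w n u * P u y) = w n y"
        using W_eq[OF st irr finB yIn] by (simp add: w_def w'_def)
      also have "\<dots> = w' n y" using yz by (simp add: w'_def)
      finally show "(\<Sum>u\<in>F. w' n u * P u y) \<le> w' n y" .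
    qed
    then show "(\<Sum>u\<in>F. h u * P u y) \<le> h y" using LIMSEQ_le[OF lim1 hlim[of y]] by blast
  qed

  define g where "g y = H y - h y" for y
  have gnn: "0 \<le> g y" for y using hle[of y] by (simp add: g_def)
  have gz: "g z = 0" using hz pz by (simp add: g_def H_def)
  have gs: "g summable_on UNIV"
    by (rule summable_on_comparison_test[OF Hs]) (auto simp: g_def hnn hle)
  have HP: "infsum (\<lambda>u. H u * P u y) UNIV = H y" for y
  proof -
    have "(\<lambda>u. H u * P u y) = (\<lambda>u. (\<pi> u * P u y) * inverse (\<pi> z))"
      by (rule ext) (simp add: H_def divide_inverse)
    then have "infsum (\<lambda>u. H u * P u y) UNIV = infsum (\<lambda>u. \<pi> u * P u y) UNIV * inverse (\<pi> z)"
      by (simp add: infsum_cmult_left')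
    also have "\<dots> = H y" using piinv[of y, symmetric] by (simp add: H_def divide_inverse)
    finally show ?thesis .
  qed
  define gP where "gP y = infsum (\<lambda>u. g u * P u y) UNIV" for y
  have gP_ge: "g y \<le> gP y" for y
  proof (cases "y = z")
    case True
    have "0 \<le> gP y" unfolding gP_def
      by (rule infsum_nonneg) (rule mult_nonneg_nonneg[OF gnn st_nonneg[OF st]])
    then show ?thesis using gz True by simp
  next
    case False
    have s1: "(\<lambda>u. H u * P u y) summable_on UNIV" by (rule weighted_summable[OF st Hs Hnn])
    have s2: "(\<lambda>u. - (h u * P u y)) summable_on UNIV"
      by (rule summable_on_uminus[THEN iffD2]) (rule weighted_summable[OF st hs hnn])
    have "gP y = infsum (\<lambda>u. H u * P u y + - (h u * P u y)) UNIV"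
      unfolding gP_def g_def by (rule infsum_cong) (simp add: algebra_simps)
    also have "\<dots> = infsum (\<lambda>u. H u * P u y) UNIV + infsum (\<lambda>u. - (h u * P u y)) UNIV"
      by (rule infsum_add[OF s1 s2])
    also have "\<dots> = H y - infsum (\<lambda>u. h u * P u y) UNIV"
      by (simp add: HP infsum_uminus)
    finally show ?thesis using hsup[OF False] by (simp add: g_def)
  qed
  have gPs: "gP summable_on UNIV" and gPsum: "infsum gP UNIV = infsum g UNIV"
    unfolding gP_def by (rule mass_preserved[OF st gs gnn])+
  have gPeq: "gP y = g y" for y
  proof -
    define d where "d y = gP y + - g y" for y
    have dnn: "0 \<le> d y" for y using gP_ge[of y] by (simp add: d_def)
    have gs': "(\<lambda>y. - g y) summable_on UNIV"
      by (rule summable_on_uminus[THEN iffD2]) (rule gs)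
    have ds: "d summable_on UNIV" unfolding d_def
      by (rule summable_on_add[OF gPs gs'])
    have "infsum d UNIV = infsum gP UNIV + infsum (\<lambda>y. - g y) UNIV"
      unfolding d_def by (rule infsum_add[OF gPs gs'])
    also have "\<dots> = 0" by (simp add: gPsum infsum_uminus)
    finally have d0: "infsum d UNIV = 0" .
    have "d y \<le> infsum d UNIV"
      using finite_sum_le_infsum[OF ds, of "{y}"] dnn by simp
    then show ?thesis using d0 dnn[of y] by (simp add: d_def)
  qed
  have g0: "g y = 0" for y
  proof (rule ccontr)
    assume "g y \<noteq> 0"
    then have gy: "0 < g y" using gnn[of y] by simp
    have cl: "b \<in> {x. 0 < g x}" if "a \<in> {x. 0 < g x}" "0 < P a b" for a b
    proof -
      have "g a * P a b \<le> g b" using weighted_term_le[OF st gs gnn, of a b] gPeq[of b] by (simp add: gP_def)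
      moreover have "0 < g a * P a b" using that by simp
      ultimately show ?thesis by simp
    qed
    have "z \<in> {x. 0 < g x}" using closed_all[OF st irr cl, where x = y and y = z] gy by simp
    then show False using gz by simp
  qed
  have hH: "h y = H y" for y using g0[of y] by (simp add: g_def)

  define c where "c n = (\<Sum>y\<in>B n. w' n y)" for n
  have ceq: "c n = 1 + (\<Sum>y\<in>B n - {z}. Wv P z (B n) y)" for n
  proof -
    have "c n = w' n z + (\<Sum>y\<in>B n - {z}. w' n y)" unfolding c_def by (rule sum.remove[OF finB zB])
    also have "(\<Sum>y\<in>B n - {z}. w' n y) = (\<Sum>y\<in>B n - {z}. Wv P z (B n) y)"
      by (rule sum.cong) (auto simp: w'_def w_def)
    finally show ?thesis by (simp add: w'_def)
  qed
  have cmono: "c m \<le> c n" if mn: "m \<le> n" for m n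
  proof -
    have "c m \<le> (\<Sum>y\<in>B m. w' n y)" unfolding c_def by (rule sum_mono) (rule wmono[OF mn])
    also have "\<dots> \<le> c n" unfolding c_def by (rule sum_mono2[OF finB monoB[OF mn]]) (rule w'nn)
    finally show ?thesis .
  qed
  have cle: "c n \<le> 1 / \<pi> z" for n
  proof -
    have "c n \<le> (\<Sum>y\<in>B n. H y)" unfolding c_def by (rule sum_mono) (rule wle)
    also have "\<dots> \<le> infsum H UNIV" by (rule finite_sum_le_infsum[OF Hs finB]) (auto simp: Hnn)
    finally show ?thesis using Hsum by simp
  qed
  define C where "C = (SUP n. c n)"
  have clim: "c \<longlonglongrightarrow> C" unfolding C_def
  proof (rule LIMSEQ_incseq_SUP)
    show "bdd_above (range c)" by (rule bdd_aboveI2) (rule cle)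
    show "incseq c" unfolding incseq_def using cmono by blast
  qed
  have Cge: "1 / \<pi> z \<le> C"
  proof -
    have "infsum H UNIV \<le> C"
    proof (rule infsum_le_finite_sums[OF Hs])
      fix F :: "'a set" assume finF: "finite F" and "F \<subseteq> UNIV"
      obtain N where N: "\<forall>n\<ge>N. F \<subseteq> B n" using evF finF by blast
      have lim1: "(\<lambda>n. \<Sum>u\<in>F. w' n u) \<longlonglongrightarrow> (\<Sum>u\<in>F. h u)" by (intro tendsto_sum hlim)
      have "\<forall>n\<ge>N. (\<Sum>u\<in>F. w' n u) \<le> c n"
      proof (intro allI impI)
        fix n assume "n \<ge> N"
        then have "F \<subseteq> B n" using N by blast
        then show "(\<Sum>u\<in>F. w' n u) \<le> c n" unfolding c_def
          by (rule sum_mono2[OF finB]) (rule w'nn)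
      qed
      then have "(\<Sum>u\<in>F. h u) \<le> C" using LIMSEQ_le[OF lim1 clim] by blast
      then show "sum H F \<le> C" using hH by simp
    qed
    then show ?thesis using Hsum by simp
  qed
  have "C \<le> 1 / \<pi> z" by (rule LIMSEQ_le_const2[OF clim]) (use cle in blast)
  then have Cval: "C = 1 / \<pi> z" using Cge by simp

  show ?thesis
  proof
    fix x
    have lim: "(\<lambda>n. w' n x / c n) \<longlonglongrightarrow> H x / (1 / \<pi> z)"
    proof (rule tendsto_divide)
      show "(\<lambda>n. w' n x) \<longlonglongrightarrow> H x" using hlim[of x] hH[of x] by simp
      show "c \<longlonglongrightarrow> 1 / \<pi> z" using clim Cval by simp
      show "1 / \<pi> z \<noteq> 0" using pz by simp
    qed
    have HH: "H x / (1 / \<pi> z) = \<pi> x" using pz by (simp add: H_def)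
    obtain N where N: "x \<in> B N" using cover by blast
    have ev: "\<forall>\<^sub>F n in sequentially. w' n x / c n = trunc_approx P z (B n) x"
      unfolding eventually_sequentially
    proof (intro exI allI impI)
      fix n assume "N \<le> n"
      then have xB: "x \<in> B n" using monoB N by blast
      show "w' n x / c n = trunc_approx P z (B n) x"
        using xB by (simp add: trunc_eq ceq w'_def w_def)
    qed
    have "(\<lambda>n. trunc_approx P z (B n) x) \<longlonglongrightarrow> \<pi> x"
      using Lim_transform_eventually[OF lim ev] HH by simp
    then show "(\<lambda>n. trunc_approx P z (A n) x) \<longlonglongrightarrow> \<pi> x"
      using filterlim_sequentially_Suc[of "\<lambda>n. trunc_approx P z (A n) x"] by (simp add: B_def)
  qed
qed

end
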